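(* Consider two states $\Theta=\{0,1\}$. Let $\mathcal{U}$ be the class of state-dependent utility functions $u\colon \mathbb{R}\times\Theta\to\mathbb{R}$ such that for each $\theta\in\Theta$ the function $u_\theta:=u(\cdot,\theta)$ is strictly increasing and weakly concave. Fix numbers $\alpha,\beta,\hat\alpha,\hat\beta>0$ and a nonempty set $W\subseteq\mathbb{R}$. For a belief $\mu\in[0,1]$ (the probability of state $1$), a utility $u\in\mathcal{U}$ and a wealth $w\in\mathbb{R}$, write $s\succeq r$ if $$\mu u_1(w)+(1-\mu)u_0(w)\ \ge\ \mu u_1(w+\alpha)+(1-\mu)u_0(w-\beta),$$ and $s\succeq \hat r$ if $$\mu u_1(w)+(1-\mu)u_0(w)\ \ge\ \mu u_1(w+\hat\alpha)+(1-\mu)u_0(w-\hat\beta).$$ Say that "the safe option must remain optimal" if for every $u\in\mathcal{U}$ and every belief $\mu\in[0,1]$: if $s\succeq r$ holds for all $w\in W$, then $s\succeq\hat r$ holds for all $w\in W$. Say that "the risky option becomes worse" if $\hat\beta\ge\beta$ and $\frac{\alpha}{\beta}\ge\frac{\hat\alpha}{\hat\beta}$. Then the safe option must remain optimal if and only if the risky option becomes worse.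
   Context: Interpretation: a decision-maker with initial wealth $w$ chooses between a safe action $s$ paying $0$ in both states, and a risky action $r$ paying $\alpha$ in state $1$ and $-\beta$ in state $0$ (or, in the second menu, $\hat r$ paying $\hat\alpha$ in state $1$ and $-\hat\beta$ in state $0$). She is a subjective expected utility maximizer with belief $\mu=\mathbb{P}(\text{state }1)$ and utility of terminal wealth $u_\theta$ in state $\theta$, the same belief and utility being used for both menus. *)

theory Defs
  imports "HOL-Analysis.Analysis"
begin

text \<open>A state-dependent utility u : R x Theta -> R is given as u :: real => nat => real;
  only its values at theta = 0 and theta = 1 matter.\<close>

definition in_U :: "(real \<Rightarrow> nat \<Rightarrow> real) \<Rightarrow> bool" where
  "in_U u \<longleftrightarrow> (\<forall>\<theta>\<in>{0,1::nat}. strict_mono (\<lambda>x. u x \<theta>) \<and> concave_on UNIV (\<lambda>x. u x \<theta>))"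

definition safe_pref :: "real \<Rightarrow> (real \<Rightarrow> nat \<Rightarrow> real) \<Rightarrow> real \<Rightarrow> real \<Rightarrow> real \<Rightarrow> bool" where
  "safe_pref \<mu> u w a b \<longleftrightarrow>
     \<mu> * u w 1 + (1 - \<mu>) * u w 0 \<ge> \<mu> * u (w + a) 1 + (1 - \<mu>) * u (w - b) 0"

definition safe_must_remain_optimal ::
  "real \<Rightarrow> real \<Rightarrow> real \<Rightarrow> real \<Rightarrow> real set \<Rightarrow> bool" where
  "safe_must_remain_optimal \<alpha> \<beta> \<alpha>' \<beta>' W \<longleftrightarrow>
     (\<forall>u. in_U u \<longrightarrow> (\<forall>\<mu>\<in>{0..1}.
        (\<forall>w\<in>W. safe_pref \<mu> u w \<alpha> \<beta>) \<longrightarrow> (\<forall>w\<in>W. safe_pref \<mu> u w \<alpha>' \<beta>')))"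

definition risky_becomes_worse :: "real \<Rightarrow> real \<Rightarrow> real \<Rightarrow> real \<Rightarrow> bool" where
  "risky_becomes_worse \<alpha> \<beta> \<alpha>' \<beta>' \<longleftrightarrow> \<beta>' \<ge> \<beta> \<and> \<alpha> / \<beta> \<ge> \<alpha>' / \<beta>'"

end

theory Submission
  imports Defs
begin

lemma pw_in_class:
  fixes p q r s :: real
  assumes "p > 0" "q \<ge> 0"
  shows "strict_mono (\<lambda>x. p * x + q * min (x + r) s) \<and> concave_on UNIV (\<lambda>x. p * x + q * min (x + r) s)"
proof
  show "strict_mono (\<lambda>x. p * x + q * min (x + r) s)"
  proof (rule strict_monoI)
    fix x y :: real assume "x < y"
    have "q * min (x + r) s \<le> q * min (y + r) s"
      using \<open>x < y\<close> assms by (intro mult_left_mono) auto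
    moreover have "p * x < p * y" using \<open>x < y\<close> assms by simp
    ultimately show "p * x + q * min (x + r) s < p * y + q * min (y + r) s" by linarith
  qed
next
  show "concave_on UNIV (\<lambda>x. p * x + q * min (x + r) s)"
    unfolding concave_on_iff
  proof (intro conjI ballI allI impI)
    fix x y u v :: real
    assume uv: "0 \<le> u" "0 \<le> v" "u + v = 1"
    have m: "min (u * x + v * y + r) s \<ge> u * min (x + r) s + v * min (y + r) s"
    proof -
      have "u * min (x + r) s \<le> u * (x + r)" "v * min (y + r) s \<le> v * (y + r)"
           "u * min (x + r) s \<le> u * s" "v * min (y + r) s \<le> v * s"
        using uv by (auto intro: mult_left_mono)
      moreover have "u * (x + r) + v * (y + r) = u * x + v * y + r"
      proof -
        have "u * (x + r) + v * (y + r) = u * x + v * y + (u + v) * r" by (simp add: algebra_simps)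
        then show ?thesis using uv by simp
      qed
      moreover have "u * s + v * s = s"
      proof -
        have "u * s + v * s = (u + v) * s" by (simp add: algebra_simps)
        then show ?thesis using uv by simp
      qed
      ultimately show ?thesis by linarith
    qed
    have "q * (u * min (x + r) s + v * min (y + r) s) \<le> q * min (u * x + v * y + r) s"
      using m assms by (intro mult_left_mono) auto
    then show "u * (p * x + q * min (x + r) s) + v * (p * y + q * min (y + r) s)
        \<le> p * (u *\<^sub>R x + v *\<^sub>R y) + q * min (u *\<^sub>R x + v *\<^sub>R y + r) s"
      by (simp add: algebra_simps)
  qed simp
qed


lemma pw_in_class2:
  fixes p q r s c :: real
  assumes "p > 0" "q \<ge> 0"
  shows "strict_mono (\<lambda>x. p * x + c + q * min (x + r) s) \<and> concave_on UNIV (\<lambda>x. p * x + c + q * min (x + r) s)"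
proof -
  have h: "strict_mono (\<lambda>x. p * x + q * min (x + r) s) \<and> concave_on UNIV (\<lambda>x. p * x + q * min (x + r) s)"
    using pw_in_class[OF assms] .
  have "strict_mono (\<lambda>x. p * x + c + q * min (x + r) s)"
    using h unfolding strict_mono_def by (smt (verit))
  moreover have "concave_on UNIV (\<lambda>x. (p * x + q * min (x + r) s) + c)"
    using h concave_on_add[of UNIV "\<lambda>x. p * x + q * min (x + r) s" "\<lambda>x. c"] concave_on_const by blast
  ultimately show ?thesis by (simp add: algebra_simps)
qed

lemma safe_pref_iff:
  "safe_pref \<mu> u w a b \<longleftrightarrow> \<mu> * (u (w + a) 1 - u w 1) \<le> (1 - \<mu>) * (u w 0 - u (w - b) 0)"
  unfolding safe_pref_def by (simp add: algebra_simps)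

lemma suff:
  fixes \<alpha> \<beta> \<alpha>' \<beta>' \<mu> w :: real and u :: "real \<Rightarrow> nat \<Rightarrow> real"
  assumes pos: "\<alpha> > 0" "\<beta> > 0" "\<alpha>' > 0" "\<beta>' > 0"
    and bb: "\<beta>' \<ge> \<beta>" and rat: "\<alpha> / \<beta> \<ge> \<alpha>' / \<beta>'"
    and U: "in_U u" and mu: "0 \<le> \<mu>" "\<mu> \<le> 1"
    and sp: "safe_pref \<mu> u w \<alpha> \<beta>"
  shows "safe_pref \<mu> u w \<alpha>' \<beta>'"
proof -
  have m1: "strict_mono (\<lambda>x. u x 1)" and c1: "concave_on UNIV (\<lambda>x. u x 1)"
    and m0: "strict_mono (\<lambda>x. u x 0)" and c0: "concave_on UNIV (\<lambda>x. u x 0)"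
    using U unfolding in_U_def by auto
  define A where "A = u (w + \<alpha>) 1 - u w 1"
  define A' where "A' = u (w + \<alpha>') 1 - u w 1"
  define B where "B = u w 0 - u (w - \<beta>) 0"
  define B' where "B' = u w 0 - u (w - \<beta>') 0"
  have hyp: "\<mu> * A \<le> (1 - \<mu>) * B" using sp unfolding safe_pref_iff A_def B_def .
  have Apos: "A > 0" using m1 pos unfolding A_def strict_mono_def by (smt (verit))
  have Bpos: "B > 0" using m0 pos unfolding B_def strict_mono_def by (smt (verit))
  have BB': "B \<le> B'"
  proof -
    have "u (w - \<beta>') 0 \<le> u (w - \<beta>) 0" using m0 bb unfolding strict_mono_def
      by (metis diff_left_mono order_le_less order_refl)
    then show ?thesis unfolding B_def B'_def by simp
  qed
  have cross: "\<alpha>' * \<beta> \<le> \<alpha> * \<beta>'" using rat pos by (simp add: field_simps)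
  have "\<mu> * A' \<le> (1 - \<mu>) * B'"
  proof (cases "\<alpha>' \<le> \<alpha>")
    case True
    have "u (w + \<alpha>') 1 \<le> u (w + \<alpha>) 1" using m1 True unfolding strict_mono_def
      by (metis add_left_mono order_le_less order_refl)
    then have "A' \<le> A" unfolding A_def A'_def by simp
    then have "\<mu> * A' \<le> \<mu> * A" using mu by (intro mult_left_mono) auto
    moreover have "(1 - \<mu>) * B \<le> (1 - \<mu>) * B'" using BB' mu by (intro mult_left_mono) auto
    ultimately show ?thesis using hyp by linarith
  next
    case False
    define t where "t = \<alpha> / \<alpha>'"
    have t: "0 \<le> t" "t \<le> 1" using False pos unfolding t_def by auto
    have "u ((1 - t) *\<^sub>R w + t *\<^sub>R (w + \<alpha>')) 1 \<ge> (1 - t) * u w 1 + t * u (w + \<alpha>') 1"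
      using concave_onD[OF c1 t] by simp
    moreover have "(1 - t) *\<^sub>R w + t *\<^sub>R (w + \<alpha>') = w + \<alpha>"
      using pos unfolding t_def by (simp add: field_simps)
    ultimately have "t * A' \<le> A" unfolding A_def A'_def by (simp add: algebra_simps)
    then have "\<alpha> * A' \<le> \<alpha>' * A" using pos unfolding t_def by (simp add: field_simps)
    define s where "s = \<beta> / \<beta>'"
    have s: "0 \<le> s" "s \<le> 1" using bb pos unfolding s_def by auto
    have "u ((1 - s) *\<^sub>R w + s *\<^sub>R (w - \<beta>')) 0 \<ge> (1 - s) * u w 0 + s * u (w - \<beta>') 0"
      using concave_onD[OF c0 s] by simp
    moreover have "(1 - s) *\<^sub>R w + s *\<^sub>R (w - \<beta>') = w - \<beta>"
      using pos unfolding s_def by (simp add: field_simps)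
    ultimately have "B \<le> s * B'" unfolding B_def B'_def by (simp add: algebra_simps)
    then have BB: "\<beta>' * B \<le> \<beta> * B'" using pos unfolding s_def by (simp add: field_simps)
    have "\<alpha> * \<beta>' * (\<mu> * A') = \<beta>' * \<mu> * (\<alpha> * A')" by simp
    also have "\<dots> \<le> \<beta>' * \<mu> * (\<alpha>' * A)" using \<open>\<alpha> * A' \<le> \<alpha>' * A\<close> mu pos
      by (intro mult_left_mono) auto
    also have "\<dots> = \<alpha>' * \<beta>' * (\<mu> * A)" by simp
    also have "\<dots> \<le> \<alpha>' * \<beta>' * ((1 - \<mu>) * B)" using hyp pos by (intro mult_left_mono) auto
    also have "\<dots> = \<alpha>' * (1 - \<mu>) * (\<beta>' * B)" by simp
    also have "\<dots> \<le> \<alpha>' * (1 - \<mu>) * (\<beta> * B')" using BB mu pos by (intro mult_left_mono) auto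
    also have "\<dots> = (\<alpha>' * \<beta>) * ((1 - \<mu>) * B')" by simp
    also have "\<dots> \<le> (\<alpha> * \<beta>') * ((1 - \<mu>) * B')"
      using cross mu Bpos BB' by (intro mult_right_mono) auto
    finally have "(\<alpha> * \<beta>') * (\<mu> * A') \<le> (\<alpha> * \<beta>') * ((1 - \<mu>) * B')" by simp
    then show ?thesis using pos by (simp add: mult_le_cancel_left_pos)
  qed
  then show ?thesis unfolding safe_pref_iff A'_def B'_def .
qed


lemma key_ineq:
  fixes t e k D \<alpha> \<beta> \<alpha>' \<beta>' :: real
  assumes pos: "\<alpha> > 0" "\<beta> > 0" "\<alpha>' > 0" "\<beta>' > 0" "\<beta>' < \<beta>"
    and F1: "k * \<beta> \<ge> \<alpha>' + \<beta>' - \<beta> + e * \<alpha>" and F2: "k * \<beta> \<ge> e * \<alpha>"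
    and F3: "D * \<beta> \<ge> (1 + e) * \<alpha>" and F4: "D \<ge> 1" and kp: "k \<ge> 0"
  shows "e * \<alpha> + min (t + \<alpha>) \<alpha>' - min t \<alpha>' \<le> k * \<beta> + D * (min (t + \<beta>') 0 - min (t - \<beta> + \<beta>') 0)"
proof -
  have L1: "min (t + \<alpha>) \<alpha>' - min t \<alpha>' \<le> \<alpha>" using pos by (simp add: min_def)
  have L2: "min (t + \<alpha>) \<alpha>' - min t \<alpha>' \<le> max 0 (\<alpha>' - t)" using pos by (simp add: min_def max_def)
  have kb: "k * \<beta> \<ge> 0" using kp pos by simp
  show ?thesis
  proof (cases "t \<le> - \<beta>'")
    case True
    then have "min (t + \<beta>') 0 - min (t - \<beta> + \<beta>') 0 = \<beta>" using pos by (simp add: min_def)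
    then show ?thesis using L1 F3 kb by (simp add: algebra_simps)
  next
    case False
    show ?thesis
    proof (cases "t \<ge> \<beta> - \<beta>'")
      case True
      then have "min (t + \<beta>') 0 - min (t - \<beta> + \<beta>') 0 = 0" using pos by (simp add: min_def)
      moreover have "max 0 (\<alpha>' - t) \<le> max 0 (\<alpha>' + \<beta>' - \<beta>)" using True by simp
      ultimately show ?thesis using L2 F1 F2 by (simp add: max_def split: if_splits)
    next
      case False2: False
      define g where "g = \<beta> - \<beta>' - t"
      have "min (t + \<beta>') 0 - min (t - \<beta> + \<beta>') 0 = g" using False False2 pos unfolding g_def by (simp add: min_def)
      moreover have "D * g \<ge> 1 * g" using F4 False2 unfolding g_def by (intro mult_right_mono) auto
      moreover have "g \<ge> 0" using False2 unfolding g_def by simp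
      moreover have "max 0 (\<alpha>' - t) \<le> g + max 0 (\<alpha>' + \<beta>' - \<beta>)" using \<open>g \<ge> 0\<close> unfolding g_def by (simp add: max_def)
      ultimately show ?thesis using L2 F1 F2 by (simp add: max_def split: if_splits)
    qed
  qed
qed

theorem theorem1:
  fixes \<alpha> \<beta> \<alpha>' \<beta>' :: real and W :: "real set"
  assumes "\<alpha> > 0" "\<beta> > 0" "\<alpha>' > 0" "\<beta>' > 0" "W \<noteq> {}"
  shows "safe_must_remain_optimal \<alpha> \<beta> \<alpha>' \<beta>' W \<longleftrightarrow> risky_becomes_worse \<alpha> \<beta> \<alpha>' \<beta>'"
proof
  assume "risky_becomes_worse \<alpha> \<beta> \<alpha>' \<beta>'"
  then show "safe_must_remain_optimal \<alpha> \<beta> \<alpha>' \<beta>' W"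
    using suff[OF assms(1-4)] unfolding risky_becomes_worse_def safe_must_remain_optimal_def
    by auto
next
  assume opt: "safe_must_remain_optimal \<alpha> \<beta> \<alpha>' \<beta>' W"
  obtain w0 where w0: "w0 \<in> W" using assms(5) by auto
  show "risky_becomes_worse \<alpha> \<beta> \<alpha>' \<beta>'"
  proof (rule ccontr)
    assume nw: "\<not> risky_becomes_worse \<alpha> \<beta> \<alpha>' \<beta>'"
    show False
    proof (cases "\<beta>' < \<beta>")
      case False
      then have rat: "\<alpha> / \<beta> < \<alpha>' / \<beta>'" using nw unfolding risky_becomes_worse_def by auto
      define u :: "real \<Rightarrow> nat \<Rightarrow> real" where
        "u = (\<lambda>x \<theta>. if \<theta> = 1 then (1/\<alpha>) * x + 0 + 0 * min (x + 0) 0 else (1/\<beta>) * x + 0 + 0 * min (x + 0) 0)"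
      have "in_U u" unfolding in_U_def u_def
        using pw_in_class2[of "1/\<alpha>" 0 0 0 0] pw_in_class2[of "1/\<beta>" 0 0 0 0] assms by simp
      moreover have "\<forall>w\<in>W. safe_pref (1/2) u w \<alpha> \<beta>"
        using assms unfolding safe_pref_iff u_def by (simp add: field_simps)
      ultimately have "safe_pref (1/2) u w0 \<alpha>' \<beta>'" using opt w0 unfolding safe_must_remain_optimal_def by auto
      moreover have "u (w0 + \<alpha>') 1 - u w0 1 = \<alpha>' / \<alpha>" unfolding u_def by (simp add: algebra_simps diff_divide_distrib add_divide_distrib)
      moreover have "u w0 0 - u (w0 - \<beta>') 0 = \<beta>' / \<beta>" unfolding u_def by (simp add: algebra_simps diff_divide_distrib add_divide_distrib)
      ultimately have "\<alpha>' / \<alpha> \<le> \<beta>' / \<beta>" unfolding safe_pref_iff by simp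
      then show False using rat assms by (simp add: field_simps)
    next
      case True
      define e where "e = \<alpha>' * (\<beta> - \<beta>') / (\<beta>' * \<alpha>)"
      define k where "k = \<alpha>' / \<beta>'"
      define D where "D = 1 + (1 + e) * \<alpha> / \<beta>"
      have ep: "e > 0" unfolding e_def using assms True by simp
      have ea: "e * \<alpha> = \<alpha>' * (\<beta> - \<beta>') / \<beta>'" unfolding e_def using assms by simp
      have kb: "k * \<beta> = \<alpha>' * \<beta> / \<beta>'" unfolding k_def by simp
      have kp: "k > 0" unfolding k_def using assms by simp
      have kb': "k * \<beta>' = \<alpha>'" unfolding k_def using assms by simp
      have F1: "k * \<beta> \<ge> \<alpha>' + \<beta>' - \<beta> + e * \<alpha>" unfolding kb ea using assms True
        by (simp add: field_simps)
      have F2: "k * \<beta> \<ge> e * \<alpha>" unfolding kb ea using assms True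
        by (simp add: field_simps)
      have F3: "D * \<beta> \<ge> (1 + e) * \<alpha>" unfolding D_def using assms ep by (simp add: field_simps)
      have F4: "D \<ge> 1" unfolding D_def using assms ep by simp
      define f1 where "f1 = (\<lambda>t::real. e * t + min t \<alpha>')"
      define f0 where "f0 = (\<lambda>t::real. k * t + D * min (t + \<beta>') 0)"
      define u :: "real \<Rightarrow> nat \<Rightarrow> real" where
        "u = (\<lambda>x \<theta>. if \<theta> = 1 then f1 (x - w0) else f0 (x - w0))"
      have e1: "(\<lambda>x. u x 1) = (\<lambda>x. e * x + (- e * w0) + 1 * min (x + (- w0)) \<alpha>')"
        unfolding u_def f1_def by (rule ext) (simp add: right_diff_distrib)
      have e0: "(\<lambda>x. u x 0) = (\<lambda>x. k * x + (- k * w0) + D * min (x + (\<beta>' - w0)) 0)"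
        unfolding u_def f0_def by (rule ext) (simp add: right_diff_distrib add_diff_eq add.commute)
      have "in_U u" unfolding in_U_def
        using pw_in_class2[of e 1 "- e * w0" "- w0" \<alpha>'] pw_in_class2[of k D "- k * w0" "\<beta>' - w0" 0]
          ep kp F4 e1 e0 by simp
      moreover have "\<forall>w\<in>W. safe_pref (1/2) u w \<alpha> \<beta>"
      proof
        fix w
        define T where "T = w - w0"
        have "e * \<alpha> + min (T + \<alpha>) \<alpha>' - min T \<alpha>' \<le>
              k * \<beta> + D * (min (T + \<beta>') 0 - min (T - \<beta> + \<beta>') 0)"
          by (rule key_ineq[OF assms(1-4) True F1 F2 F3 F4]) (use kp in simp)
        moreover have "u (w + \<alpha>) 1 - u w 1 = f1 (T + \<alpha>) - f1 T" unfolding u_def T_def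
          by (simp add: diff_add_eq)
        moreover have "f1 (T + \<alpha>) - f1 T = e * \<alpha> + min (T + \<alpha>) \<alpha>' - min T \<alpha>'"
          unfolding f1_def by (simp add: distrib_left)
        moreover have "u w 0 - u (w - \<beta>) 0 = f0 T - f0 (T - \<beta>)" unfolding u_def T_def
          by (simp add: diff_diff_eq add.commute)
        moreover have "f0 T - f0 (T - \<beta>) = k * \<beta> + D * (min (T + \<beta>') 0 - min (T - \<beta> + \<beta>') 0)"
          unfolding f0_def by (simp add: right_diff_distrib)
        ultimately show "safe_pref (1/2) u w \<alpha> \<beta>" unfolding safe_pref_iff
          by simp
      qed
      ultimately have "safe_pref (1/2) u w0 \<alpha>' \<beta>'" using opt w0 unfolding safe_must_remain_optimal_def by auto
      moreover have "u (w0 + \<alpha>') 1 - u w0 1 = e * \<alpha>' + \<alpha>'"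
        unfolding u_def f1_def using assms by simp
      moreover have "u w0 0 - u (w0 - \<beta>') 0 = \<alpha>'"
        unfolding u_def f0_def using assms kb' by simp
      ultimately have "e * \<alpha>' \<le> 0" unfolding safe_pref_iff by simp
      then show False using ep assms by (simp add: mult_le_0_iff)
    qed
  qed
qed

end
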